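(* There is no equal norm tight integer frame with an odd number of elements in $\mathcal{H}_2$.
   Context: $\mathcal{H}_M$ is the real $M$-dimensional Hilbert space, identified with $\mathbb{R}^M$ via a fixed orthonormal basis. An equal norm tight integer frame (ENTIF) with $N$ elements in $\mathcal{H}_M$ is an $M\times N$ integer matrix $A$ of rank $M$ with $AA^T=\lambda I_M$ for some $\lambda>0$ and all columns of the same Euclidean norm. *)

theory Defs
  imports Complex_Main "Jordan_Normal_Form.DL_Rank"
begin

definition ENTIF :: "nat \<Rightarrow> nat \<Rightarrow> int mat \<Rightarrow> bool" where
  "ENTIF M N A \<longleftrightarrow>
     A \<in> carrier_mat M N \<and>
     vec_space.rank M (map_mat real_of_int A :: real mat) = M \<and>
     (\<exists>c::real. c > 0 \<and>
        map_mat real_of_int (A * transpose_mat A) = c \<cdot>\<^sub>m (1\<^sub>m M)) \<and>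
     (\<forall>j < N. \<forall>k < N. sqrt (\<Sum>i<M. real_of_int (A $$ (i, j))^2)
                          = sqrt (\<Sum>i<M. real_of_int (A $$ (i, k))^2))"

end

theory Submission
  imports Defs
begin

lemma sq_mod4: "(x::int)^2 mod 4 = (if even x then 0 else 1)"
proof (cases "even x")
  case True then obtain k where "x = 2*k" by blast
  then show ?thesis by (simp add: power2_eq_square)
next
  case False then obtain k where "x = 2*k+1" using oddE by blast
  then have "x^2 = 4*(k*k+k) + 1" by (simp add: power2_eq_square algebra_simps)
  then have "x^2 mod 4 = (4*(k*k+k)+1) mod 4" by simp
  also have "\<dots> = 1" by presburger
  finally show ?thesis using False by simp
qed

lemma odd_sum_parity: "(\<forall>j<(n::nat). odd (f j :: int)) \<Longrightarrow> even (\<Sum>j<n. f j) \<longleftrightarrow> even n"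
  by (induction n) auto

lemma descent:
  fixes c :: int and a b :: "nat \<Rightarrow> int"
  assumes "odd N" "\<forall>j<N. a j^2 + b j^2 = c" "(\<Sum>j<N. a j * b j) = (0::int)"
   "(\<Sum>j<N. a j^2) = (\<Sum>j<N. b j^2)" "c > 0" shows False
  using assms
proof (induction "nat c" arbitrary: c a b rule: less_induct)
  case (less c a b)
  have N0: "0 < N" using less.prems(1) by (cases N) auto
  have "(\<Sum>j<N. a j^2 + b j^2) = (\<Sum>j<N. c)" using less.prems(2) by simp
  then have "2 * (\<Sum>j<N. a j^2) = int N * c" using less.prems(4) by (simp add: sum.distrib)
  then have "even (int N * c)" by (metis dvd_triv_left)
  then have ec: "even c" using less.prems(1) by simp
  show False
  proof (cases "\<forall>j<N. even (a j) \<and> even (b j)")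
    case True
    define a' where "a' = (\<lambda>j. a j div 2)"
    define b' where "b' = (\<lambda>j. b j div 2)"
    have ea: "\<And>j. j<N \<Longrightarrow> a j = 2 * a' j" using True a'_def by auto
    have eb: "\<And>j. j<N \<Longrightarrow> b j = 2 * b' j" using True b'_def by auto
    define c' where "c' = a' 0^2 + b' 0^2"
    have cc: "c = 4 * c'" using less.prems(2) N0 ea[of 0] eb[of 0] unfolding c'_def
      by (auto simp: power2_eq_square algebra_simps)
    have h2: "\<forall>j<N. a' j^2 + b' j^2 = c'"
    proof (intro allI impI)
      fix j assume "j<N"
      then have "4*(a' j^2 + b' j^2) = 4*c'" using less.prems(2) ea eb cc
        by (auto simp: power2_eq_square algebra_simps)
      then show "a' j^2 + b' j^2 = c'" by simp
    qed
    have "(\<Sum>j<N. a j * b j) = (\<Sum>j<N. 4 * (a' j * b' j))"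
      using ea eb by (intro sum.cong) auto
    then have h3: "(\<Sum>j<N. a' j * b' j) = 0" using less.prems(3) by (simp add: sum_distrib_left[symmetric])
    have "(\<Sum>j<N. a j^2) = (\<Sum>j<N. 4 * a' j^2)" using ea by (intro sum.cong) (auto simp: power2_eq_square)
    moreover have "(\<Sum>j<N. b j^2) = (\<Sum>j<N. 4 * b' j^2)" using eb by (intro sum.cong) (auto simp: power2_eq_square)
    ultimately have h4: "(\<Sum>j<N. a' j^2) = (\<Sum>j<N. b' j^2)" using less.prems(4)
      by (simp add: sum_distrib_left[symmetric])
    have "c' > 0" using cc less.prems(5) by simp
    moreover have "nat c' < nat c" using cc less.prems(5) by simp
    ultimately show False using less.hyps[of c' a' b'] less.prems(1) h2 h3 h4 by blast
  next
    case False
    then obtain j where j: "j<N" "odd (a j) \<or> odd (b j)" by blast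
    have m: "\<And>k. k<N \<Longrightarrow> c mod 4 = ((a k^2 mod 4) + (b k^2 mod 4)) mod 4"
    proof -
      fix k assume "k<N"
      then have "c = a k^2 + b k^2" using less.prems(2) by simp
      then show "c mod 4 = ((a k^2 mod 4) + (b k^2 mod 4)) mod 4" by (simp add: mod_add_eq)
    qed
    have "c mod 4 = 2"
    proof -
      have "even (a j^2 + b j^2)" using ec less.prems(2) j by simp
      then have "even (a j) = even (b j)" by simp
      then have "odd (a j) \<and> odd (b j)" using j(2) by blast
      then show ?thesis using m[OF j(1)] by (simp add: sq_mod4)
    qed
    have "\<forall>k<N. odd (a k * b k)"
    proof (intro allI impI)
      fix k assume k: "k<N"
      have "(if even (a k) then 0 else 1) + (if even (b k) then 0 else 1) = (2::int)"
        using m[OF k] \<open>c mod 4 = 2\<close> by (simp add: sq_mod4)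
      then have "odd (a k) \<and> odd (b k)"
        by (cases "even (a k)"; cases "even (b k)") simp_all
      then show "odd (a k * b k)" by simp
    qed
    then have "odd (\<Sum>k<N. a k * b k)" using odd_sum_parity[of N "\<lambda>k. a k * b k"] less.prems(1) by simp
    then show False using less.prems(3) by simp
  qed
qed

theorem theorem4p8:
  fixes N :: nat and A :: "int mat"
  assumes "odd N"
  shows "\<not> ENTIF 2 N A"
proof
  assume E: "ENTIF 2 N A"
  then have car: "A \<in> carrier_mat 2 N" unfolding ENTIF_def by blast
  from E obtain c :: real where c0: "c > 0"
    and eq: "map_mat real_of_int (A * transpose_mat A) = c \<cdot>\<^sub>m (1\<^sub>m 2)"
    unfolding ENTIF_def by blast
  have cn: "\<forall>j < N. \<forall>k < N. sqrt (\<Sum>i<2. real_of_int (A $$ (i, j))^2)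
                          = sqrt (\<Sum>i<2. real_of_int (A $$ (i, k))^2)"
    using E unfolding ENTIF_def by blast
  define a where "a = (\<lambda>j. A $$ (0, j))"
  define b where "b = (\<lambda>j. A $$ (1, j))"
  have entry: "\<And>i k. i < 2 \<Longrightarrow> k < 2 \<Longrightarrow> (A * transpose_mat A) $$ (i,k) = (\<Sum>j<N. A $$ (i,j) * A $$ (k,j))"
    using car by (auto simp: scalar_prod_def lessThan_atLeast0)
  have e00: "real_of_int (\<Sum>j<N. a j * a j) = c"
    using arg_cong[OF eq, of "\<lambda>M. M $$ (0,0)"] entry[of 0 0] car unfolding a_def by simp
  have e11: "real_of_int (\<Sum>j<N. b j * b j) = c"
    using arg_cong[OF eq, of "\<lambda>M. M $$ (1,1)"] entry[of 1 1] car unfolding b_def by simp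
  have e01: "real_of_int (\<Sum>j<N. a j * b j) = 0"
    using arg_cong[OF eq, of "\<lambda>M. M $$ (0,1)"] entry[of 0 1] car unfolding a_def b_def by simp
  have N0: "0 < N" using assms by (cases N) auto
  define d where "d = a 0^2 + b 0^2"
  have col: "\<forall>j<N. a j^2 + b j^2 = d"
  proof (intro allI impI)
    fix j assume "j<N"
    then have "sqrt (\<Sum>i<2. real_of_int (A $$ (i, j))^2) = sqrt (\<Sum>i<2. real_of_int (A $$ (i, 0))^2)"
      using cn N0 by blast
    then have "real_of_int (a j^2 + b j^2) = real_of_int d"
      unfolding a_def b_def d_def by (simp add: numeral_2_eq_2)
    then show "a j^2 + b j^2 = d" by linarith
  qed
  have s1: "(\<Sum>j<N. a j * b j) = 0" using e01 by linarith
  have s2: "(\<Sum>j<N. a j^2) = (\<Sum>j<N. b j^2)" proof -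
    have "real_of_int (\<Sum>j<N. a j * a j) = real_of_int (\<Sum>j<N. b j * b j)" using e00 e11 by simp
    then have "(\<Sum>j<N. a j * a j) = (\<Sum>j<N. b j * b j)" by (rule of_int_eq_iff[THEN iffD1])
    then show ?thesis by (simp add: power2_eq_square)
  qed
  have "(\<Sum>j<N. a j^2 + b j^2) = (\<Sum>j<N. d)" using col by simp
  then have "int N * d = 2 * (\<Sum>j<N. a j * a j)" using s2 by (simp add: sum.distrib power2_eq_square)
  moreover have "(\<Sum>j<N. a j * a j) > 0" using e00 c0 by linarith
  ultimately have "d > 0" using N0 by (smt (verit) mult_nonneg_nonpos of_nat_0_le_iff)
  then show False using descent[OF assms col s1 s2] by blast
qed

end
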